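(* Let $(X,b,m)$ be a connected combinatorial graph (i.e. $m\equiv1$, $b$ takes values in $\{0,1\}$, and $\sum_{y}b(x,y)\le\delta$ for all $x$ for some $\delta\ge0$). Let $D\subset X$ be relatively dense with covering radius $R$, and set $\Omega:=X\setminus D$. Then $$\beta_\Omega\ge\frac{1}{\mathrm{vol}[R]} .$$
   Context: Here $X$ is countable, $b:X\times X\to\{0,1\}$ symmetric with $b(x,x)=0$, $\mathrm{vol}(A)=\#A$; connected means any two points are joined by a path $(x_0,\dots,x_k)$ with $b(x_j,x_{j+1})=1$; $d$ is the combinatorial distance (minimal number of edges of a path), $B_r(x):=\{y:d(x,y)\le r\}$, and $\mathrm{vol}[s]:=\sup_{x\in X}\#B_s(x)$. The covering radius of $D$ is $\mathrm{Covr}(D):=\inf\{R>0:\bigcup_{p\in D}B_R(p)=X\}$, and $D$ is relatively dense if this is finite. For $S\subset X$, $\partial S:=\{(x,y)\in X\times X: x\in S,\ y\notin S,\ b(x,y)=1\}$, and $\beta_\Omega:=\inf\{\#\partial S/\mathrm{vol}(S):\emptyset\ne S\subset\Omega,\ \#S<\infty\}$. *)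

theory Defs
  imports "HOL-Analysis.Analysis" "HOL-Library.Countable"
begin

text \<open>Combinatorial graph on the countable type 'a (the vertex set X = UNIV),
  edge weight b given as a symmetric irreflexive relation (b x y = True iff b(x,y)=1),
  measure m = 1 (counting measure).\<close>

definition comb_graph :: "('a \<Rightarrow> 'a \<Rightarrow> bool) \<Rightarrow> bool" where
  "comb_graph b \<longleftrightarrow> (\<forall>x y. b x y \<longleftrightarrow> b y x) \<and> (\<forall>x. \<not> b x x)"

definition bounded_degree :: "('a \<Rightarrow> 'a \<Rightarrow> bool) \<Rightarrow> bool" where
  "bounded_degree b \<longleftrightarrow> (\<exists>\<delta>::nat. \<forall>x. finite {y. b x y} \<and> card {y. b x y} \<le> \<delta>)"

definition connected_graph :: "('a \<Rightarrow> 'a \<Rightarrow> bool) \<Rightarrow> bool" where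
  "connected_graph b \<longleftrightarrow> (\<forall>x y. \<exists>n. (b ^^ n) x y)"

definition gdist :: "('a \<Rightarrow> 'a \<Rightarrow> bool) \<Rightarrow> 'a \<Rightarrow> 'a \<Rightarrow> nat" where
  "gdist b x y = (LEAST n. (b ^^ n) x y)"

definition gball :: "('a \<Rightarrow> 'a \<Rightarrow> bool) \<Rightarrow> real \<Rightarrow> 'a \<Rightarrow> 'a set" where
  "gball b r x = {y. real (gdist b x y) \<le> r}"

definition volsup :: "('a \<Rightarrow> 'a \<Rightarrow> bool) \<Rightarrow> real \<Rightarrow> ereal" where
  "volsup b s = (SUP x. ereal (real (card (gball b s x))))"

definition covr_set :: "('a \<Rightarrow> 'a \<Rightarrow> bool) \<Rightarrow> 'a set \<Rightarrow> real set" where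
  "covr_set b D = {R. R > 0 \<and> (\<Union>p\<in>D. gball b R p) = UNIV}"

definition Covr :: "('a \<Rightarrow> 'a \<Rightarrow> bool) \<Rightarrow> 'a set \<Rightarrow> real" where
  "Covr b D = Inf (covr_set b D)"

definition relatively_dense :: "('a \<Rightarrow> 'a \<Rightarrow> bool) \<Rightarrow> 'a set \<Rightarrow> bool" where
  "relatively_dense b D \<longleftrightarrow> covr_set b D \<noteq> {}"

definition edge_boundary :: "('a \<Rightarrow> 'a \<Rightarrow> bool) \<Rightarrow> 'a set \<Rightarrow> ('a \<times> 'a) set" where
  "edge_boundary b S = {(x, y). x \<in> S \<and> y \<notin> S \<and> b x y}"

text \<open>Cheeger constant; infimum taken in the extended reals (inf of empty set = \<infinity>).\<close>
definition beta :: "('a \<Rightarrow> 'a \<Rightarrow> bool) \<Rightarrow> 'a set \<Rightarrow> ereal" where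
  "beta b \<Omega> = (INF S\<in>{S. S \<noteq> {} \<and> S \<subseteq> \<Omega> \<and> finite S}.
      ereal (real (card (edge_boundary b S)) / real (card S)))"

end

theory Submission
  imports Defs
begin

lemma path_exit:
  assumes sym: "\<forall>x y. b x y \<longleftrightarrow> b y x"
  shows "(b^^n) p x \<Longrightarrow> p \<notin> S \<Longrightarrow> x \<in> S \<Longrightarrow>
    \<exists>u v m. u \<in> S \<and> v \<notin> S \<and> b u v \<and> m \<le> n \<and> (b^^m) u x"
proof (induction n arbitrary: x)
  case 0 then show ?case by simp
next
  case (Suc n)
  from Suc.prems(1) obtain y where y: "(b^^n) p y" "b y x" by (auto elim: relpowp_Suc_E)
  show ?case
  proof (cases "y \<in> S")
    case True
    from Suc.IH[OF y(1) Suc.prems(2) True] obtain u v m where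
      h: "u \<in> S" "v \<notin> S" "b u v" "m \<le> n" "(b^^m) u y" by blast
    then have "(b^^Suc m) u x" using y(2) by (auto intro: relpowp_Suc_I)
    then show ?thesis using h by (intro exI[of _ u] exI[of _ v] exI[of _ "Suc m"]) auto
  next
    case False
    then show ?thesis using Suc.prems(3) y(2) sym
      by (intro exI[of _ x] exI[of _ y] exI[of _ 0]) auto
  qed
qed

lemma finite_reach:
  fixes b :: "'a \<Rightarrow> 'a \<Rightarrow> bool"
  assumes "\<forall>x. finite {y. b x y}"
  shows "finite {y. (b^^n) x y}"
proof (induction n)
  case 0
  have "{y. (b^^0) x y} = {x}" by (auto elim: relpowp_0_E intro: relpowp_0_I)
  then show ?case by simp
next
  case (Suc n)
  have "{y. (b^^Suc n) x y} \<subseteq> (\<Union>z\<in>{y. (b^^n) x y}. {y. b z y})"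
    by (auto elim: relpowp_Suc_E)
  then show ?case using Suc assms by (meson finite_UN_I finite_subset)
qed

lemma finite_gball:
  assumes conn: "connected_graph b" and fin: "\<forall>x. finite {y. b x y}"
  shows "finite (gball b r x)"
proof -
  have "gball b r x \<subseteq> (\<Union>n\<in>{..nat \<lfloor>r\<rfloor>}. {y. (b^^n) x y})"
  proof
    fix y assume "y \<in> gball b r x"
    then have le: "real (gdist b x y) \<le> r" by (simp add: gball_def)
    have "(b ^^ gdist b x y) x y"
      unfolding gdist_def using conn unfolding connected_graph_def by (meson LeastI_ex)
    moreover have "int (gdist b x y) \<le> \<lfloor>r\<rfloor>" using le by (simp add: le_floor_iff)
    then have "gdist b x y \<le> nat \<lfloor>r\<rfloor>" by (simp add: le_nat_iff)
    ultimately show "y \<in> (\<Union>n\<in>{..nat \<lfloor>r\<rfloor>}. {y. (b^^n) x y})" by auto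
  qed
  moreover have "finite (\<Union>n\<in>{..nat \<lfloor>r\<rfloor>}. {y. (b^^n) x y})"
    using finite_reach[OF fin] by auto
  ultimately show ?thesis by (rule finite_subset)
qed

theorem proposition6p2:
  fixes b :: "'a::countable \<Rightarrow> 'a \<Rightarrow> bool" and D :: "'a set" and R :: real
  assumes "comb_graph b" and "bounded_degree b" and "connected_graph b"
    and "relatively_dense b D" and "R = Covr b D"
  shows "beta b (UNIV - D) \<ge> 1 / volsup b R"
proof -
  have sym: "\<forall>x y. b x y \<longleftrightarrow> b y x" using assms(1) by (simp add: comb_graph_def)
  have fin: "\<forall>x. finite {y. b x y}" using assms(2) by (auto simp: bounded_degree_def)
  define C where "C = covr_set b D"
  have Cne: "C \<noteq> {}" using assms(4) by (simp add: C_def relatively_dense_def)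
  have RC: "R = Inf C" using assms(5) by (simp add: C_def Covr_def)
  have cover: "\<exists>p\<in>D. real (gdist b p x) \<le> R" for x
  proof -
    obtain R0 where R0: "R0 \<in> C" using Cne by auto
    then have "x \<in> (\<Union>p\<in>D. gball b R0 p)" by (simp add: C_def covr_set_def)
    then obtain p0 where p0: "p0 \<in> D" by auto
    define k where "k = (LEAST n. \<exists>p\<in>D. gdist b p x = n)"
    have "\<exists>p\<in>D. gdist b p x = k" unfolding k_def by (rule LeastI[where k="gdist b p0 x"]) (use p0 in blast)
    then obtain p where p: "p \<in> D" "gdist b p x = k" by blast
    have "real k \<le> Inf C"
    proof (rule cInf_greatest[OF Cne])
      fix R' assume "R' \<in> C"
      then have "x \<in> (\<Union>p\<in>D. gball b R' p)" by (simp add: C_def covr_set_def)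
      then obtain q where q: "q \<in> D" "real (gdist b q x) \<le> R'" by (auto simp: gball_def)
      have "k \<le> gdist b q x" unfolding k_def using q(1) by (intro Least_le) blast
      then show "real k \<le> R'" using q(2) by linarith
    qed
    then show ?thesis using p RC by auto
  qed
  define V where "V = volsup b R"
  have Vge: "ereal (real (card (gball b R x))) \<le> V" for x
    unfolding V_def volsup_def by (rule SUP_upper) auto
  show ?thesis unfolding beta_def V_def[symmetric]
  proof (rule INF_greatest)
    fix S assume "S \<in> {S. S \<noteq> {} \<and> S \<subseteq> UNIV - D \<and> finite S}"
    then have S: "S \<noteq> {}" "S \<subseteq> UNIV - D" "finite S" by auto
    let ?E = "edge_boundary b S"
    have Efin: "finite ?E"
    proof -
      have "?E \<subseteq> Sigma S (\<lambda>x. {y. b x y})" by (auto simp: edge_boundary_def)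
      moreover have "finite (Sigma S (\<lambda>x. {y. b x y}))" using S(3) fin by auto
      ultimately show ?thesis by (rule finite_subset)
    qed
    have sub: "S \<subseteq> (\<Union>e\<in>?E. gball b R (fst e))"
    proof
      fix x assume x: "x \<in> S"
      obtain p where p: "p \<in> D" "real (gdist b p x) \<le> R" using cover by blast
      have pS: "p \<notin> S" using p(1) S(2) by auto
      have path: "(b ^^ gdist b p x) p x"
        unfolding gdist_def using assms(3) unfolding connected_graph_def by (meson LeastI_ex)
      obtain u v m where uv: "u \<in> S" "v \<notin> S" "b u v" "m \<le> gdist b p x" "(b^^m) u x"
        using path_exit[OF sym path pS x] by blast
      have "gdist b u x \<le> m" unfolding gdist_def using uv(5) by (rule Least_le)
      then have "x \<in> gball b R u" using uv(4) p(2) by (simp add: gball_def)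
      moreover have "(u, v) \<in> ?E" using uv by (simp add: edge_boundary_def)
      ultimately show "x \<in> (\<Union>e\<in>?E. gball b R (fst e))" by force
    qed
    have cardS: "card S \<le> (\<Sum>e\<in>?E. card (gball b R (fst e)))"
    proof -
      have "card S \<le> card (\<Union>e\<in>?E. gball b R (fst e))"
        using sub Efin finite_gball[OF assms(3) fin] by (intro card_mono) auto
      also have "\<dots> \<le> (\<Sum>e\<in>?E. card (gball b R (fst e)))"
        using Efin by (rule card_UN_le)
      finally show ?thesis .
    qed
    have cpos: "card S > 0" using S by (simp add: card_gt_0_iff)
    have V0: "V \<ge> 0" using Vge[of undefined] by (meson ereal_less_eq(5) of_nat_0_le_iff order.trans)
    show "1 / V \<le> ereal (real (card ?E) / real (card S))"
    proof (cases V)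
      case PInf then show ?thesis by simp
    next
      case MInf then show ?thesis using V0 by simp
    next
      case (real v)
      have cb: "real (card (gball b R x)) \<le> v" for x using Vge[of x] real by simp
      have "real (card S) \<le> (\<Sum>e\<in>?E. real (card (gball b R (fst e))))"
        using cardS by (metis of_nat_le_iff of_nat_sum)
      also have "\<dots> \<le> (\<Sum>e\<in>?E. v)" by (rule sum_mono) (rule cb)
      also have "\<dots> = real (card ?E) * v" by simp
      finally have ineq: "real (card S) \<le> real (card ?E) * v" .
      have vpos: "v > 0"
      proof (rule ccontr)
        assume "\<not> v > 0"
        then have "real (card ?E) * v \<le> 0" by (simp add: mult_nonneg_nonpos)
        then show False using ineq cpos by linarith
      qed
      have "1 / v \<le> real (card ?E) / real (card S)"
        using ineq vpos cpos by (simp add: divide_simps mult.commute)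
      then show ?thesis using real vpos by (simp add: divide_ereal_def inverse_eq_divide)
    qed
  qed
qed

end
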